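(* Let $n\ge2$ and $(x_1,\dots,x_n)\in\mathbb R^n$ with $-1<x_1\le x_2\le\dots\le x_n$ and $\sum_{i=1}^nx_i=0$. Then $$\prod_{i=1}^n(1+x_i)\le1-\frac{n}{2(n-1)}x_1^2\le1-\frac{\sum_{i=1}^nx_i^2}{2(n-1)^2}.$$ *)

theory Defs
  imports Complex_Main
begin

end

theory Submission
  imports Defs
begin

lemma amgm_aux:
  fixes y :: "nat \<Rightarrow> real"
  assumes fin: "finite S" and cS: "card S = m" and m: "m > 0"
    and pos: "\<And>i. i \<in> S \<Longrightarrow> y i > -1"
  shows "(\<Prod>i\<in>S. 1 + y i) \<le> (1 + (\<Sum>i\<in>S. y i) / m)^m"
proof -
  define c where "c = (\<Sum>i\<in>S. y i) / m"
  have "(\<Sum>i\<in>S. y i) > (\<Sum>i\<in>S. -1)"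
    using fin m cS pos by (intro sum_strict_mono) auto
  hence "(\<Sum>i\<in>S. y i) > - real m" using cS by simp
  hence c1: "1 + c > 0" using m unfolding c_def by (simp add: field_simps)
  have "(\<Prod>i\<in>S. (1 + y i) / (1 + c)) \<le> (\<Prod>i\<in>S. exp ((y i - c) / (1 + c)))"
  proof (rule prod_mono)
    fix i assume "i \<in> S"
    hence yi: "1 + y i > 0" using pos by force
    have "(1 + y i) / (1 + c) = 1 + (y i - c) / (1 + c)" using c1 by (simp add: field_simps)
    also have "\<dots> \<le> exp ((y i - c) / (1 + c))" by (rule exp_ge_add_one_self)
    finally show "0 \<le> (1 + y i) / (1 + c) \<and> (1 + y i) / (1 + c) \<le> exp ((y i - c) / (1 + c))"
      using yi c1 by simp
  qed
  also have "\<dots> = exp (\<Sum>i\<in>S. (y i - c) / (1 + c))" by (simp add: exp_sum fin)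
  also have "(\<Sum>i\<in>S. (y i - c) / (1 + c)) = ((\<Sum>i\<in>S. y i) - m * c) / (1 + c)"
    using cS by (simp add: sum_divide_distrib[symmetric] sum_subtractf)
  also have "\<dots> = 0" using m unfolding c_def by simp
  finally have "(\<Prod>i\<in>S. 1 + y i) / (1 + c) ^ m \<le> 1"
    using cS by (simp add: prod_dividef)
  thus ?thesis using c1 unfolding c_def[symmetric] by (simp add: divide_le_eq)
qed

lemma poly_aux:
  fixes b :: real and m :: nat
  assumes b: "b \<ge> 0" and m: "m \<ge> 1"
  shows "(1 - b) * (1 + b / m)^m \<le> 1 - (m + 1) / (2 * m) * b^2"
proof -
  define h where "h = (\<lambda>t::real. (1 - t) * (1 + t / m)^m + (m + 1) / (2 * m) * t^2)"
  obtain k where k: "m = Suc k" using m by (cases m) auto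
  have "h b \<le> h 0"
  proof (rule DERIV_nonpos_imp_nonincreasing[OF b])
    fix t :: real assume t: "0 \<le> t" "t \<le> b"
    have d: "(h has_real_derivative
        ((1 - t) * (m * (1 + t/m)^(m - 1) * (1 / m)) - (1 + t / m)^m + (m + 1) / (2 * m) * (2 * t))) (at t)"
      unfolding h_def by (auto intro!: derivative_eq_intros)
    have p: "(1 + t / m)^k \<ge> 1" using t m by (intro one_le_power) auto
    have "(1 - t) * (m * (1 + t/m)^(m - 1) * (1 / m)) - (1 + t / m)^m + (m + 1) / (2 * m) * (2 * t)
        = (m + 1) * t / m * (1 - (1 + t/m)^k)"
    proof -
      define q where "q = (1 + t / m)"
      have mm: "real m > 0" using m by simp
      have "(1 - t) * (m * q^(m - 1) * (1 / m)) - q^m + (m + 1) / (2 * m) * (2 * t)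
          = ((1 - t) - q) * q^k + (m + 1) / m * t"
      proof -
        have "q^m = q * q^k" "m - 1 = k" using k by auto
        then show ?thesis using mm by (simp add: field_simps)
      qed
      also have "(1 - t) - q = - ((m + 1) / m * t)" using mm unfolding q_def by (simp add: field_simps)
      also have "- ((m + 1) / m * t) * q^k + (m + 1) / m * t = (m + 1) * t / m * (1 - q^k)"
        using mm by (simp add: field_simps)
      finally show ?thesis unfolding q_def .
    qed
    also have "\<dots> \<le> 0" using p t by (intro mult_nonneg_nonpos) auto
    finally show "\<exists>y. (h has_real_derivative y) (at t) \<and> y \<le> 0" using d by blast
  qed
  thus ?thesis unfolding h_def by simp
qed


lemma sumsq_aux:
  fixes y :: "nat \<Rightarrow> real"
  assumes "finite S" "\<And>i. i \<in> S \<Longrightarrow> y i \<ge> 0"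
  shows "(\<Sum>i\<in>S. (y i)^2) \<le> (\<Sum>i\<in>S. y i)^2"
  using assms
proof (induction S rule: finite_induct)
  case empty then show ?case by simp
next
  case (insert j F)
  have "0 \<le> y j" "0 \<le> (\<Sum>i\<in>F. y i)" using insert.prems by (auto intro: sum_nonneg)
  hence "0 \<le> 2 * y j * (\<Sum>i\<in>F. y i)" by simp
  moreover have "(\<Sum>i\<in>F. (y i)^2) \<le> (\<Sum>i\<in>F. y i)^2" using insert by auto
  ultimately show ?case using insert.hyps by (simp add: power2_eq_square algebra_simps)
qed

theorem lemmaA2:
  fixes n :: nat and x :: "nat \<Rightarrow> real"
  assumes "n \<ge> 2"
    and "-1 < x 1"
    and "\<And>i. 1 \<le> i \<Longrightarrow> i < n \<Longrightarrow> x i \<le> x (i + 1)"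
    and "(\<Sum>i=1..n. x i) = 0"
  shows "(\<Prod>i=1..n. 1 + x i) \<le> 1 - real n / (2 * (real n - 1)) * (x 1)^2
         \<and> 1 - real n / (2 * (real n - 1)) * (x 1)^2
           \<le> 1 - (\<Sum>i=1..n. (x i)^2) / (2 * (real n - 1)^2)"
proof -
  define a where "a = x 1"
  have mono: "\<forall>j. 1 \<le> j \<and> j \<le> n \<longrightarrow> a \<le> x j"
  proof
    fix j show "1 \<le> j \<and> j \<le> n \<longrightarrow> a \<le> x j"
    proof (induction j)
      case 0 then show ?case by simp
    next
      case (Suc j)
      show ?case
      proof (cases "j = 0")
        case True then show ?thesis by (simp add: a_def)
      next
        case False
        then show ?thesis using Suc assms(3)[of j] by fastforce
      qed
    qed
  qed
  have ge: "\<And>j. j \<in> {1..n} \<Longrightarrow> a \<le> x j" using mono by auto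
  have "(\<Sum>i=1..n. a) \<le> (\<Sum>i=1..n. x i)" using ge by (intro sum_mono) auto
  hence "real n * a \<le> 0" using assms(4) by simp
  hence a0: "a \<le> 0" using assms(1) by (simp add: mult_le_0_iff)
  have a1: "1 + a > 0" using assms(2) a_def by simp
  have split: "{1..n} = insert 1 {2..n}" using assms(1) by auto
  have sumS: "(\<Sum>i\<in>{2..n}. x i) = - a" using assms(4) unfolding split a_def by simp
  define m where "m = n - 1"
  have m1: "m \<ge> 1" and rm: "real m = real n - 1" using assms(1) by (auto simp: m_def)
  have cS: "card {2..n} = m" by (simp add: m_def)
  have prodS: "(\<Prod>i\<in>{2..n}. 1 + x i) \<le> (1 + (- a) / m)^m"
  proof -
    have "- 1 < x i" if "i \<in> {2..n}" for i
    proof -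
      have "i \<in> {1..n}" using that by auto
      then have "a \<le> x i" by (rule ge)
      then show ?thesis using assms(2) a_def by simp
    qed
    then show ?thesis using amgm_aux[of "{2..n}" m x] cS m1 sumS by simp
  qed
  have "(\<Prod>i=1..n. 1 + x i) = (1 + a) * (\<Prod>i\<in>{2..n}. 1 + x i)"
    unfolding split a_def by simp
  also have "\<dots> \<le> (1 - (- a)) * (1 + (- a) / m)^m"
    using prodS a1 by (simp add: mult_left_mono)
  also have "\<dots> \<le> 1 - (m + 1) / (2 * m) * (- a)^2"
    using poly_aux[of "- a" m] a0 m1 by simp
  also have "\<dots> = 1 - real n / (2 * (real n - 1)) * (x 1)^2"
    using rm by (simp add: a_def)
  finally have P1: "(\<Prod>i=1..n. 1 + x i) \<le> 1 - real n / (2 * (real n - 1)) * (x 1)^2" .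
  define y where "y i = x i - a" for i
  have y0: "\<And>i. i \<in> {1..n} \<Longrightarrow> y i \<ge> 0" using ge y_def by auto
  have sy: "(\<Sum>i=1..n. y i) = - real n * a" using assms(4) by (simp add: y_def sum_subtractf)
  have "(\<Sum>i=1..n. (x i)^2) = (\<Sum>i=1..n. (y i)^2 + 2 * a * y i + a^2)"
    by (intro sum.cong) (auto simp: y_def power2_eq_square algebra_simps)
  also have "\<dots> = (\<Sum>i=1..n. (y i)^2) + 2 * a * (\<Sum>i=1..n. y i) + real n * a^2"
    by (simp add: sum.distrib sum_distrib_left)
  also have "\<dots> \<le> (\<Sum>i=1..n. y i)^2 + 2 * a * (\<Sum>i=1..n. y i) + real n * a^2"
    using sumsq_aux[of "{1..n}" y] y0 by simp
  also have "\<dots> = real n * (real n - 1) * a^2" unfolding sy by (simp add: power2_eq_square algebra_simps)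
  finally have sq: "(\<Sum>i=1..n. (x i)^2) \<le> real n * (real n - 1) * a^2" .
  have pos: "real n - 1 > 0" using assms(1) by simp
  have "(\<Sum>i=1..n. (x i)^2) / (2 * (real n - 1)^2) \<le> real n * (real n - 1) * a^2 / (2 * (real n - 1)^2)"
    using sq pos by (intro divide_right_mono) auto
  also have "\<dots> = real n / (2 * (real n - 1)) * (x 1)^2"
  proof -
    define r where "r = real n - 1"
    have "r > 0" using pos r_def by simp
    then have "real n * r * a^2 / (2 * r^2) = real n / (2 * r) * a^2"
      by (simp add: power2_eq_square field_simps)
    then show ?thesis unfolding r_def a_def .
  qed
  finally have P2: "(\<Sum>i=1..n. (x i)^2) / (2 * (real n - 1)^2) \<le> real n / (2 * (real n - 1)) * (x 1)^2" .
  show ?thesis using P1 P2 by linarith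
qed

end
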